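(* Let $(X,* )$ be a proto unital shelf or an idempotent semi-group, and let $a,b\in X$. Then $a*b=b*a$ if and only if $a*b*a=b*a*b$.
   Context: A shelf is a set with a binary operation $*$ satisfying $(a*b)*c=(a*c)*(b*c)$ for all $a,b,c$. A proto unital shelf is a shelf satisfying $a*b=b*(a*b)$ and $a*b=(a*b)*b$ for all $a,b$; such shelves are associative. An idempotent semi-group is an associative magma with $a*a=a$ for all $a$. *)

theory Defs
  imports Main
begin

definition shelf :: "('a \<Rightarrow> 'a \<Rightarrow> 'a) \<Rightarrow> bool" where
  "shelf m \<longleftrightarrow> (\<forall>a b c. m (m a b) c = m (m a c) (m b c))"

definition proto_unital_shelf :: "('a \<Rightarrow> 'a \<Rightarrow> 'a) \<Rightarrow> bool" where
  "proto_unital_shelf m \<longleftrightarrow> shelf m \<and>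
     (\<forall>a b. m a b = m b (m a b)) \<and> (\<forall>a b. m a b = m (m a b) b)"

definition idempotent_semigroup :: "('a \<Rightarrow> 'a \<Rightarrow> 'a) \<Rightarrow> bool" where
  "idempotent_semigroup m \<longleftrightarrow>
     (\<forall>a b c. m (m a b) c = m a (m b c)) \<and> (\<forall>a. m a a = a)"

end

theory Submission
  imports Defs
begin

theorem proposition2p1:
  fixes m :: "'a \<Rightarrow> 'a \<Rightarrow> 'a" and a b :: 'a
  assumes "proto_unital_shelf m \<or> idempotent_semigroup m"
  shows "m a b = m b a \<longleftrightarrow> m (m a b) a = m (m b a) b"
  using assms
proof
  assume P: "proto_unital_shelf m"
  then have s: "\<forall>a b c. m (m a b) c = m (m a c) (m b c)" and u1: "\<forall>a b. m a b = m b (m a b)"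
    and u2: "\<forall>a b. m a b = m (m a b) b"
    by (auto simp: proto_unital_shelf_def shelf_def)
  show ?thesis
  proof
    assume "m a b = m b a" thus "m (m a b) a = m (m b a) b" by (metis u2)
  next
    assume h: "m (m a b) a = m (m b a) b"
    have A: "\<forall>a b c. m (m a b) c = m a (m b c)" by (metis s u1 u2)
    show "m a b = m b a" by (metis s u1 h)
  qed
next
  assume "idempotent_semigroup m"
  then have A: "\<forall>a b c. m (m a b) c = m a (m b c)" and I: "\<forall>a. m a a = a"
    by (auto simp: idempotent_semigroup_def)
  show ?thesis
  proof
    assume e: "m a b = m b a" thus "m (m a b) a = m (m b a) b" by (metis A I)
  next
    assume h: "m (m a b) a = m (m b a) b"
    have 1: "m a b = m (m b a) b" by (metis A I h)
    have 2: "m b a = m (m b a) b" by (metis A I h)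
    show "m a b = m b a" using 1 2 by simp
  qed
qed

end
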